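(* For every sequent $\Gamma\Rightarrow\Delta$: if $\mathsf{Grz_{Seq}}+\mathsf{cut}\vdash\Gamma\Rightarrow\Delta$, then $\mathsf{Grz_{Seq}}\vdash\Gamma\Rightarrow\Delta$.
   Context: Formulas are built from $\bot$ and atomic propositions using $\to$ and $\Box$. A sequent is $\Gamma\Rightarrow\Delta$ with $\Gamma,\Delta$ finite multisets of formulas; $\Box\Pi$ denotes the multiset $\{\Box B:B\in\Pi\}$. The (ordinary, finite-proof) sequent calculus $\mathsf{Grz_{Seq}}$ has initial sequents $\Gamma,A\Rightarrow A,\Delta$ (any formula $A$) and $\Gamma,\bot\Rightarrow\Delta$, and rules: $(\to_L)$ from $\Gamma,B\Rightarrow\Delta$ and $\Gamma\Rightarrow A,\Delta$ infer $\Gamma,A\to B\Rightarrow\Delta$; $(\to_R)$ from $\Gamma,A\Rightarrow B,\Delta$ infer $\Gamma\Rightarrow A\to B,\Delta$; $(\mathsf{refl})$ from $\Gamma,B,\Box B\Rightarrow\Delta$ infer $\Gamma,\Box B\Rightarrow\Delta$; $(\Box_{\mathsf{Grz}})$ from $\Box\Pi,\Box(A\to\Box A)\Rightarrow A$ infer $\Gamma,\Box\Pi\Rightarrow\Box A,\Delta$. The system $\mathsf{Grz_{Seq}}+\mathsf{cut}$ adds the rule $(\mathsf{cut})$: from $\Gamma\Rightarrow A,\Delta$ and $\Gamma,A\Rightarrow\Delta$ infer $\Gamma\Rightarrow\Delta$. Provability means existence of a finite derivation tree. *)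

theory Defs
  imports Main "HOL-Library.Multiset"
begin

datatype 'a fm = Bot | Atom 'a | Imp "'a fm" "'a fm" | Box "'a fm"

inductive grz :: "bool \<Rightarrow> 'a fm multiset \<Rightarrow> 'a fm multiset \<Rightarrow> bool" for c :: bool where
  ax: "grz c (\<Gamma> + {#A#}) ({#A#} + \<Delta>)"
| botL: "grz c (\<Gamma> + {#Bot#}) \<Delta>"
| impL: "grz c (\<Gamma> + {#B#}) \<Delta> \<Longrightarrow> grz c \<Gamma> ({#A#} + \<Delta>)
         \<Longrightarrow> grz c (\<Gamma> + {#Imp A B#}) \<Delta>"
| impR: "grz c (\<Gamma> + {#A#}) ({#B#} + \<Delta>) \<Longrightarrow> grz c \<Gamma> ({#Imp A B#} + \<Delta>)"
| refl: "grz c (\<Gamma> + {#B#} + {#Box B#}) \<Delta> \<Longrightarrow> grz c (\<Gamma> + {#Box B#}) \<Delta>"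
| boxGrz: "grz c (image_mset Box \<Pi> + {#Box (Imp A (Box A))#}) {#A#}
         \<Longrightarrow> grz c (\<Gamma> + image_mset Box \<Pi>) ({#Box A#} + \<Delta>)"
| cut: "c \<Longrightarrow> grz c \<Gamma> ({#A#} + \<Delta>) \<Longrightarrow> grz c (\<Gamma> + {#A#}) \<Delta> \<Longrightarrow> grz c \<Gamma> \<Delta>"

abbreviation Grz_Seq :: "'a fm multiset \<Rightarrow> 'a fm multiset \<Rightarrow> bool" where
  "Grz_Seq \<equiv> grz False"

abbreviation Grz_Seq_cut :: "'a fm multiset \<Rightarrow> 'a fm multiset \<Rightarrow> bool" where
  "Grz_Seq_cut \<equiv> grz True"

end

theory Submission
  imports Defs
begin

lemma grz_weak:
  assumes "grz c \<Gamma> \<Delta>" shows "grz c (\<Gamma> + \<Gamma>') (\<Delta> + \<Delta>')"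
  using assms
proof (induction arbitrary: \<Gamma>' \<Delta>' rule: grz.induct)
  case (ax \<Gamma> A \<Delta>)
  have "grz c ((\<Gamma>+\<Gamma>') + {#A#}) ({#A#} + (\<Delta>+\<Delta>'))" by (rule grz.ax)
  then show ?case by (simp add: ac_simps)
next
  case (botL \<Gamma> \<Delta>)
  have "grz c ((\<Gamma>+\<Gamma>') + {#Bot#}) (\<Delta>+\<Delta>')" by (rule grz.botL)
  then show ?case by (simp add: ac_simps)
next
  case (impL \<Gamma> B \<Delta> A)
  have "grz c ((\<Gamma>+\<Gamma>') + {#B#}) (\<Delta>+\<Delta>')" using impL.IH(1)[of \<Gamma>' \<Delta>'] by (simp add: ac_simps)
  moreover have "grz c (\<Gamma>+\<Gamma>') ({#A#} + (\<Delta>+\<Delta>'))" using impL.IH(2)[of \<Gamma>' \<Delta>'] by (simp add: ac_simps)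
  ultimately have "grz c ((\<Gamma>+\<Gamma>') + {#Imp A B#}) (\<Delta>+\<Delta>')" by (rule grz.impL)
  then show ?case by (simp add: ac_simps)
next
  case (impR \<Gamma> A B \<Delta>)
  have "grz c ((\<Gamma>+\<Gamma>') + {#A#}) ({#B#} + (\<Delta>+\<Delta>'))" using impR.IH[of \<Gamma>' \<Delta>'] by (simp add: ac_simps)
  then have "grz c (\<Gamma>+\<Gamma>') ({#Imp A B#} + (\<Delta>+\<Delta>'))" by (rule grz.impR)
  then show ?case by (simp add: ac_simps)
next
  case (refl \<Gamma> B \<Delta>)
  have "grz c ((\<Gamma>+\<Gamma>') + {#B#} + {#Box B#}) (\<Delta>+\<Delta>')" using refl.IH[of \<Gamma>' \<Delta>'] by (simp add: ac_simps add_mset_commute)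
  then have "grz c ((\<Gamma>+\<Gamma>') + {#Box B#}) (\<Delta>+\<Delta>')" by (rule grz.refl)
  then show ?case by (simp add: ac_simps add_mset_commute)
next
  case (boxGrz \<Pi> A \<Gamma> \<Delta>)
  have "grz c ((\<Gamma>+\<Gamma>') + image_mset Box \<Pi>) ({#Box A#} + (\<Delta>+\<Delta>'))"
    using boxGrz.hyps(1) by (rule grz.boxGrz)
  then show ?case by (simp add: ac_simps)
next
  case (cut \<Gamma> A \<Delta>)
  have "grz c (\<Gamma>+\<Gamma>') ({#A#} + (\<Delta>+\<Delta>'))" using cut.IH(1)[of \<Gamma>' \<Delta>'] by (simp add: ac_simps)
  moreover have "grz c ((\<Gamma>+\<Gamma>') + {#A#}) (\<Delta>+\<Delta>')" using cut.IH(2)[of \<Gamma>' \<Delta>'] by (simp add: ac_simps)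
  ultimately show ?case using cut.hyps(1) grz.cut by blast
qed

lemma grz_weak_sub:
  assumes "grz c \<Gamma> \<Delta>" "\<Gamma> \<subseteq># \<Gamma>'" "\<Delta> \<subseteq># \<Delta>'" shows "grz c \<Gamma>' \<Delta>'"
proof -
  have "grz c (\<Gamma> + (\<Gamma>' - \<Gamma>)) (\<Delta> + (\<Delta>' - \<Delta>))" using assms(1) by (rule grz_weak)
  then show ?thesis using assms(2,3) by (simp add: subset_mset.add_diff_inverse)
qed

lemma grz_ax_in: "X \<in># \<Gamma> \<Longrightarrow> X \<in># \<Delta> \<Longrightarrow> grz c \<Gamma> \<Delta>"
proof -
  assume a: "X \<in># \<Gamma>" "X \<in># \<Delta>"
  have "grz c ((\<Gamma> - {#X#}) + {#X#}) ({#X#} + (\<Delta> - {#X#}))" by (rule grz.ax)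
  then show ?thesis using a by simp
qed

lemma grz_bot_in: "Bot \<in># \<Gamma> \<Longrightarrow> grz c \<Gamma> \<Delta>"
proof -
  assume a: "Bot \<in># \<Gamma>"
  have "grz c ((\<Gamma> - {#Bot#}) + {#Bot#}) \<Delta>" by (rule grz.botL)
  then show ?thesis using a by simp
qed

fun sat :: "('w \<Rightarrow> 'w \<Rightarrow> bool) \<Rightarrow> ('w \<Rightarrow> 'a \<Rightarrow> bool) \<Rightarrow> 'w \<Rightarrow> 'a fm \<Rightarrow> bool" where
  "sat R V w Bot = False"
| "sat R V w (Atom p) = V w p"
| "sat R V w (Imp A B) = (sat R V w A \<longrightarrow> sat R V w B)"
| "sat R V w (Box A) = (\<forall>v. R w v \<longrightarrow> sat R V v A)"

lemma soundness:
  assumes "grz c \<Gamma> \<Delta>"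
  and RW: "\<And>w v. R w v \<Longrightarrow> v \<in> W"
  and Rrefl: "\<And>w. w \<in> W \<Longrightarrow> R w w"
  and Rtrans: "\<And>w v u. R w v \<Longrightarrow> R v u \<Longrightarrow> R w u"
  and Rf: "\<And>w v. R w v \<Longrightarrow> w \<noteq> v \<Longrightarrow> f w < (f v :: nat)"
  and fb: "\<And>w. w \<in> W \<Longrightarrow> f w \<le> b"
  shows "w \<in> W \<Longrightarrow> (\<forall>A\<in>#\<Gamma>. sat R V w A) \<Longrightarrow> (\<exists>A\<in>#\<Delta>. sat R V w A)"
  using assms(1)
proof (induction arbitrary: w rule: grz.induct)
  case (ax \<Gamma> A \<Delta>)
  then show ?case by auto
next
  case (botL \<Gamma> \<Delta>)
  then show ?case by auto
next
  case (impL \<Gamma> B \<Delta> A)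
  then show ?case by fastforce
next
  case (impR \<Gamma> A B \<Delta>)
  then show ?case by fastforce
next
  case (refl \<Gamma> B \<Delta>)
  then show ?case using Rrefl by fastforce
next
  case (cut \<Gamma> A \<Delta>)
  then show ?case by fastforce
next
  case (boxGrz \<Pi> A \<Gamma> \<Delta>)
  have boxes: "\<forall>B\<in>#\<Pi>. sat R V w (Box B)"
  proof
    fix B assume "B \<in># \<Pi>"
    then have "Box B \<in># \<Gamma> + image_mset Box \<Pi>" by simp
    then show "sat R V w (Box B)" using boxGrz.prems(2) by blast
  qed
  have "sat R V w (Box A)"
  proof (rule ccontr)
    assume "\<not> sat R V w (Box A)"
    then obtain v0 where v0: "R w v0" "\<not> sat R V v0 A" by auto
    let ?P = "\<lambda>v. R w v \<and> \<not> sat R V v A"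
    have "\<forall>y. ?P y \<longrightarrow> f y < Suc b" using fb RW by (meson le_imp_less_Suc)
    then obtain v where v: "?P v" and vmax: "\<forall>y. ?P y \<longrightarrow> f y \<le> f v"
      using ex_has_greatest_nat[of ?P v0 f "Suc b"] v0 by blast
    have vW: "v \<in> W" using v RW by blast
    have "\<forall>X\<in>#image_mset Box \<Pi> + {#Box (Imp A (Box A))#}. sat R V v X"
    proof
      fix X assume "X \<in># image_mset Box \<Pi> + {#Box (Imp A (Box A))#}"
      then consider (a) B where "B \<in># \<Pi>" "X = Box B" | (b) "X = Box (Imp A (Box A))" by auto
      then show "sat R V v X"
      proof cases
        case a
        then show ?thesis using boxes v Rtrans by auto
      next
        case b
        have "sat R V u (Box A)" if vu: "R v u" and uA: "sat R V u A" for u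
        proof (simp, intro allI impI, rule ccontr)
          fix u' assume uu': "R u u'" and nA: "\<not> sat R V u' A"
          have "R v u'" using vu uu' Rtrans by blast
          then have P': "?P u'" using v nA Rtrans by blast
          have "u' = v"
          proof (rule ccontr)
            assume "u' \<noteq> v"
            then have "f v < f u'" using Rf \<open>R v u'\<close> by metis
            then show False using vmax P' by force
          qed
          then have "R u v" using uu' by simp
          have "u = v"
          proof (rule ccontr)
            assume "u \<noteq> v"
            then show False using Rf \<open>R u v\<close> vu by (metis less_asym)
          qed
          then show False using uA v by simp
        qed
        then show ?thesis using b by simp
      qed
    qed
    then have "\<exists>X\<in>#{#A#}. sat R V v X" using boxGrz.IH vW by blast
    then show False using v by simp
  qed
  then show ?case by simp
qed


fun sub :: "'a fm \<Rightarrow> 'a fm set" where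
  "sub Bot = {Bot}"
| "sub (Atom p) = {Atom p}"
| "sub (Imp A B) = insert (Imp A B) (sub A \<union> sub B)"
| "sub (Box A) = insert (Box A) (sub A)"

lemma finite_sub: "finite (sub A)" by (induction A) auto
lemma sub_refl: "A \<in> sub A" by (cases A) auto
lemma sub_trans: "B \<in> sub A \<Longrightarrow> sub B \<subseteq> sub A" by (induction A) auto

definition isimp :: "'a fm \<Rightarrow> bool" where "isimp X = (\<exists>A B. X = Imp A B)"
definition isbox :: "'a fm \<Rightarrow> bool" where "isbox X = (\<exists>A. X = Box A)"

fun unbox :: "'a fm \<Rightarrow> 'a fm" where
  "unbox (Box A) = A"
| "unbox _ = Bot"

locale cm =
  fixes S :: "'a fm set"
  assumes finS: "finite S"
begin

definition SubS :: "'a fm set" where "SubS = \<Union>(sub ` S)"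
definition CC :: "'a fm set" where
  "CC = SubS \<union> (\<lambda>A. Box (Imp A (Box A))) ` (Box -` SubS) \<union> (\<lambda>A. Imp A (Box A)) ` (Box -` SubS)"

lemma fin_SubS: "finite SubS"
  unfolding SubS_def using finS finite_sub by blast

lemma fin_CC: "finite CC"
proof -
  have "finite (Box -` SubS)" using fin_SubS by (rule finite_vimageI) (simp add: inj_def)
  then show ?thesis unfolding CC_def using fin_SubS by blast
qed

lemma SubS_CC: "SubS \<subseteq> CC" unfolding CC_def by blast

lemma SubS_closed: "X \<in> SubS \<Longrightarrow> Y \<in> sub X \<Longrightarrow> Y \<in> SubS"
  unfolding SubS_def using sub_trans by blast

lemma c2: "Imp A B \<in> SubS \<Longrightarrow> A \<in> SubS \<and> B \<in> SubS"
  using SubS_closed[of "Imp A B"] sub_refl by fastforce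

lemma c_box_sub: "Box A \<in> SubS \<Longrightarrow> A \<in> SubS"
  using SubS_closed[of "Box A"] sub_refl by fastforce

lemma c1: "Imp A B \<in> CC \<Longrightarrow> A \<in> SubS \<and> B \<in> CC"
proof -
  assume "Imp A B \<in> CC"
  then consider "Imp A B \<in> SubS" | X where "Imp A B = Imp X (Box X)" "Box X \<in> SubS"
    unfolding CC_def by blast
  then show ?thesis
  proof cases
    case 1 then show ?thesis using c2 SubS_CC by blast
  next
    case 2 then show ?thesis using c_box_sub SubS_CC by blast
  qed
qed

lemma c3: "Box B \<in> CC \<Longrightarrow> B \<in> CC"
proof -
  assume "Box B \<in> CC"
  then consider "Box B \<in> SubS" | X where "Box B = Box (Imp X (Box X))" "Box X \<in> SubS"
    unfolding CC_def by blast
  then show ?thesis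
  proof cases
    case 1 then show ?thesis using c_box_sub SubS_CC by blast
  next
    case 2
    then have "B = Imp X (Box X)" by simp
    moreover have "Imp X (Box X) \<in> (\<lambda>A. Imp A (Box A)) ` (Box -` SubS)" using 2 by blast
    ultimately show ?thesis unfolding CC_def by blast
  qed
qed

lemma c4: "Box A \<in> SubS \<Longrightarrow> Box (Imp A (Box A)) \<in> CC"
proof -
  assume "Box A \<in> SubS"
  then have "Box (Imp A (Box A)) \<in> (\<lambda>A. Box (Imp A (Box A))) ` (Box -` SubS)" by blast
  then show ?thesis unfolding CC_def by blast
qed

definition W :: "('a fm set \<times> 'a fm set) set" where
 "W = {(G,D). G \<subseteq> CC \<and> D \<subseteq> SubS \<and>
   (\<forall>A B. Imp A B \<in> G \<longrightarrow> A \<in> D \<or> B \<in> G) \<and>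
   (\<forall>A B. Imp A B \<in> D \<longrightarrow> A \<in> G \<and> B \<in> D) \<and>
   (\<forall>B. Box B \<in> G \<longrightarrow> B \<in> G) \<and>
   (\<exists>\<Gamma> \<Delta>. \<not> Grz_Seq \<Gamma> \<Delta> \<and> set_mset \<Gamma> = {X\<in>G. \<not>isimp X} \<and> set_mset \<Delta> = {X\<in>D. \<not>isimp X})}"

definition sinv where
  "sinv \<Gamma> \<Delta> G D \<longleftrightarrow> set_mset \<Gamma> \<subseteq> G \<and> G \<subseteq> CC \<and> set_mset \<Delta> \<subseteq> D \<and> D \<subseteq> SubS \<and>
  (\<forall>X\<in>G. \<not>isimp X \<longrightarrow> X \<in># \<Gamma>) \<and> (\<forall>X\<in>D. \<not>isimp X \<longrightarrow> X \<in># \<Delta>) \<and>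
  (\<forall>A B. Imp A B \<in> G \<longrightarrow> Imp A B \<in># \<Gamma> \<or> A \<in> D \<or> B \<in> G) \<and>
  (\<forall>A B. Imp A B \<in> D \<longrightarrow> Imp A B \<in># \<Delta> \<or> (A \<in> G \<and> B \<in> D))"

definition m1 :: "'a fm set \<Rightarrow> 'a fm set \<Rightarrow> nat" where
  "m1 G D = card (CC - G) + card (SubS - D)"
definition m2 :: "'a fm multiset \<Rightarrow> 'a fm multiset \<Rightarrow> nat" where
  "m2 \<Gamma> \<Delta> = sum_mset (image_mset size (\<Gamma> + \<Delta>))"

lemma m1_mono: "G \<subseteq> G' \<Longrightarrow> D \<subseteq> D' \<Longrightarrow> m1 G' D' \<le> m1 G D"
proof -
  assume "G \<subseteq> G'" "D \<subseteq> D'"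
  then have "card (CC - G') \<le> card (CC - G)" "card (SubS - D') \<le> card (SubS - D)"
    using fin_CC fin_SubS by (intro card_mono; blast)+
  then show ?thesis by (simp add: m1_def)
qed

lemma m1_strict: "B \<in> CC \<Longrightarrow> B \<notin> G \<Longrightarrow> m1 (insert B G) D < m1 G D"
proof -
  assume "B \<in> CC" "B \<notin> G"
  then have "CC - insert B G \<subset> CC - G" by blast
  then have "card (CC - insert B G) < card (CC - G)" using fin_CC by (intro psubset_card_mono) auto
  then show ?thesis by (simp add: m1_def)
qed


lemma saturate_aux:
  "\<forall>\<Gamma> \<Delta> G D. m1 G D = n \<longrightarrow> m2 \<Gamma> \<Delta> = k \<longrightarrow> sinv \<Gamma> \<Delta> G D \<longrightarrow> \<not> Grz_Seq \<Gamma> \<Delta> \<longrightarrow>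
     (\<exists>G' D'. (G',D') \<in> W \<and> G \<subseteq> G' \<and> D \<subseteq> D')"
proof (induction n arbitrary: k rule: less_induct)
  case (less n)
  note outer = less
  show ?case
  proof (induction k rule: less_induct)
    case (less k)
    note inner = less
    show ?case
    proof (intro allI impI)
      fix \<Gamma> \<Delta> G D assume e1: "m1 G D = n" and e2: "m2 \<Gamma> \<Delta> = k" and si: "sinv \<Gamma> \<Delta> G D"
        and nd: "\<not> Grz_Seq \<Gamma> \<Delta>"
      have IH: "\<exists>G'' D''. (G'',D'') \<in> W \<and> G' \<subseteq> G'' \<and> D' \<subseteq> D''"
        if "sinv \<Gamma>' \<Delta>' G' D'" "\<not> Grz_Seq \<Gamma>' \<Delta>'" "G \<subseteq> G'" "D \<subseteq> D'"
          "m2 \<Gamma>' \<Delta>' < m2 \<Gamma> \<Delta> \<or> m1 G' D' < m1 G D" for \<Gamma>' \<Delta>' G' D'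
      proof -
        have le: "m1 G' D' \<le> m1 G D" using m1_mono that(3,4) .
        show ?thesis
        proof (cases "m1 G' D' < m1 G D")
          case True then show ?thesis using outer[of "m1 G' D'" "m2 \<Gamma>' \<Delta>'"] e1 that(1,2) by blast
        next
          case False
          then have "m1 G' D' = n" "m2 \<Gamma>' \<Delta>' < k" using le that(5) e1 e2 by auto
          then show ?thesis using inner that(1,2) by blast
        qed
      qed
      have sG: "set_mset \<Gamma> \<subseteq> G" and GC: "G \<subseteq> CC" and sD: "set_mset \<Delta> \<subseteq> D" and DS: "D \<subseteq> SubS"
        and nG: "\<forall>X\<in>G. \<not>isimp X \<longrightarrow> X \<in># \<Gamma>" and nD: "\<forall>X\<in>D. \<not>isimp X \<longrightarrow> X \<in># \<Delta>"
        and iG: "\<forall>A B. Imp A B \<in> G \<longrightarrow> Imp A B \<in># \<Gamma> \<or> A \<in> D \<or> B \<in> G"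
        and iD: "\<forall>A B. Imp A B \<in> D \<longrightarrow> Imp A B \<in># \<Delta> \<or> (A \<in> G \<and> B \<in> D)"
        using si unfolding sinv_def by blast+
      show "\<exists>G' D'. (G',D') \<in> W \<and> G \<subseteq> G' \<and> D \<subseteq> D'"
      proof (cases "\<exists>A B. Imp A B \<in># \<Gamma>")
        case True
        then obtain A B where iab: "Imp A B \<in># \<Gamma>" by blast
        define \<Gamma>0 where "\<Gamma>0 = \<Gamma> - {#Imp A B#}"
        have \<Gamma>eq: "\<Gamma> = add_mset (Imp A B) \<Gamma>0" using iab by (simp add: \<Gamma>0_def)
        have AB: "A \<in> SubS" "B \<in> CC" using c1 iab sG GC by blast+
        have "\<not> Grz_Seq (\<Gamma>0 + {#B#}) \<Delta> \<or> \<not> Grz_Seq \<Gamma>0 ({#A#} + \<Delta>)"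
          using grz.impL[of False \<Gamma>0 B \<Delta> A] nd \<Gamma>eq by auto
        then show ?thesis
        proof
          assume nd': "\<not> Grz_Seq (\<Gamma>0 + {#B#}) \<Delta>"
          have "sinv (add_mset B \<Gamma>0) \<Delta> (insert B G) D"
            unfolding sinv_def
          proof (intro conjI)
            show "set_mset (add_mset B \<Gamma>0) \<subseteq> insert B G" using sG \<Gamma>eq by auto
            show "insert B G \<subseteq> CC" using GC AB by auto
            show "\<forall>X\<in>insert B G. \<not> isimp X \<longrightarrow> X \<in># add_mset B \<Gamma>0"
              using nG \<Gamma>eq by (auto simp: isimp_def)
            show "\<forall>A' B'. Imp A' B' \<in> insert B G \<longrightarrow> Imp A' B' \<in># add_mset B \<Gamma>0 \<or> A' \<in> D \<or> B' \<in> insert B G"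
              using iG \<Gamma>eq by auto
            show "\<forall>A' B'. Imp A' B' \<in> D \<longrightarrow> Imp A' B' \<in># \<Delta> \<or> A' \<in> insert B G \<and> B' \<in> D"
              using iD by auto
          qed (use sD DS nD in auto)
          moreover have "m2 (add_mset B \<Gamma>0) \<Delta> < m2 \<Gamma> \<Delta>" by (simp add: m2_def \<Gamma>eq)
          moreover have "\<not> Grz_Seq (add_mset B \<Gamma>0) \<Delta>" using nd' by simp
          ultimately show ?thesis using IH[of "add_mset B \<Gamma>0" \<Delta> "insert B G" D] by blast
        next
          assume nd': "\<not> Grz_Seq \<Gamma>0 ({#A#} + \<Delta>)"
          have "sinv \<Gamma>0 (add_mset A \<Delta>) G (insert A D)"
            unfolding sinv_def
          proof (intro conjI)
            show "set_mset \<Gamma>0 \<subseteq> G" using sG \<Gamma>eq by auto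
            show "insert A D \<subseteq> SubS" using DS AB by auto
            show "\<forall>X\<in>G. \<not> isimp X \<longrightarrow> X \<in># \<Gamma>0"
              using nG \<Gamma>eq by (auto simp: isimp_def)
            show "\<forall>A' B'. Imp A' B' \<in> G \<longrightarrow> Imp A' B' \<in># \<Gamma>0 \<or> A' \<in> insert A D \<or> B' \<in> G"
              using iG \<Gamma>eq by auto
            show "\<forall>A' B'. Imp A' B' \<in> insert A D \<longrightarrow> Imp A' B' \<in># add_mset A \<Delta> \<or> A' \<in> G \<and> B' \<in> insert A D"
              using iD by auto
          qed (use sD GC nD in auto)
          moreover have "m2 \<Gamma>0 (add_mset A \<Delta>) < m2 \<Gamma> \<Delta>" by (simp add: m2_def \<Gamma>eq)
          moreover have "\<not> Grz_Seq \<Gamma>0 (add_mset A \<Delta>)" using nd' by simp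
          ultimately show ?thesis using IH[of \<Gamma>0 "add_mset A \<Delta>" G "insert A D"] by blast
        qed
      next
        case noimpG: False
        show ?thesis
        proof (cases "\<exists>A B. Imp A B \<in># \<Delta>")
          case True
          then obtain A B where iab: "Imp A B \<in># \<Delta>" by blast
          define \<Delta>0 where "\<Delta>0 = \<Delta> - {#Imp A B#}"
          have \<Delta>eq: "\<Delta> = add_mset (Imp A B) \<Delta>0" using iab by (simp add: \<Delta>0_def)
          have AB: "A \<in> SubS" "B \<in> SubS" using c2 iab sD DS by blast+
          have nd': "\<not> Grz_Seq (add_mset A \<Gamma>) (add_mset B \<Delta>0)"
            using grz.impR[of False \<Gamma> A B \<Delta>0] nd \<Delta>eq by auto
          have "sinv (add_mset A \<Gamma>) (add_mset B \<Delta>0) (insert A G) (insert B D)"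
            unfolding sinv_def
          proof (intro conjI)
            show "set_mset (add_mset A \<Gamma>) \<subseteq> insert A G" using sG by auto
            show "insert A G \<subseteq> CC" using GC AB SubS_CC by auto
            show "set_mset (add_mset B \<Delta>0) \<subseteq> insert B D" using sD \<Delta>eq by auto
            show "insert B D \<subseteq> SubS" using DS AB by auto
            show "\<forall>X\<in>insert A G. \<not> isimp X \<longrightarrow> X \<in># add_mset A \<Gamma>"
              using nG by auto
            show "\<forall>X\<in>insert B D. \<not> isimp X \<longrightarrow> X \<in># add_mset B \<Delta>0"
              using nD \<Delta>eq by (auto simp: isimp_def)
            show "\<forall>A' B'. Imp A' B' \<in> insert A G \<longrightarrow> Imp A' B' \<in># add_mset A \<Gamma> \<or> A' \<in> insert B D \<or> B' \<in> insert A G"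
              using iG by auto
            show "\<forall>A' B'. Imp A' B' \<in> insert B D \<longrightarrow> Imp A' B' \<in># add_mset B \<Delta>0 \<or> A' \<in> insert A G \<and> B' \<in> insert B D"
              using iD \<Delta>eq by auto
          qed
          moreover have "m2 (add_mset A \<Gamma>) (add_mset B \<Delta>0) < m2 \<Gamma> \<Delta>" by (simp add: m2_def \<Delta>eq)
          ultimately show ?thesis using IH[of "add_mset A \<Gamma>" "add_mset B \<Delta>0" "insert A G" "insert B D"] nd' by blast
        next
          case noimpD: False
          show ?thesis
          proof (cases "\<exists>B. Box B \<in># \<Gamma> \<and> B \<notin> G")
            case True
            then obtain B where bB: "Box B \<in># \<Gamma>" "B \<notin> G" by blast
            define \<Gamma>0 where "\<Gamma>0 = \<Gamma> - {#Box B#}"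
            have \<Gamma>eq: "\<Gamma> = add_mset (Box B) \<Gamma>0" using bB by (simp add: \<Gamma>0_def)
            have BC: "B \<in> CC" using c3 bB sG GC by blast
            have nd': "\<not> Grz_Seq (add_mset B \<Gamma>) \<Delta>"
              using grz.refl[of False \<Gamma>0 B \<Delta>] nd \<Gamma>eq by (auto simp: add_mset_commute)
            have "sinv (add_mset B \<Gamma>) \<Delta> (insert B G) D"
              unfolding sinv_def
            proof (intro conjI)
              show "set_mset (add_mset B \<Gamma>) \<subseteq> insert B G" using sG by auto
              show "insert B G \<subseteq> CC" using GC BC by auto
              show "\<forall>X\<in>insert B G. \<not> isimp X \<longrightarrow> X \<in># add_mset B \<Gamma>"
                using nG by auto
              show "\<forall>A' B'. Imp A' B' \<in> insert B G \<longrightarrow> Imp A' B' \<in># add_mset B \<Gamma> \<or> A' \<in> D \<or> B' \<in> insert B G"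
                using iG by auto
              show "\<forall>A' B'. Imp A' B' \<in> D \<longrightarrow> Imp A' B' \<in># \<Delta> \<or> A' \<in> insert B G \<and> B' \<in> D"
                using iD by auto
            qed (use sD DS nD in auto)
            moreover have "m1 (insert B G) D < m1 G D" using m1_strict BC bB by blast
            ultimately show ?thesis using IH[of "add_mset B \<Gamma>" \<Delta> "insert B G" D] nd' by blast
          next
            case nobox: False
            have "(G,D) \<in> W"
              unfolding W_def
            proof (clarsimp, intro conjI)
              show "G \<subseteq> CC" "D \<subseteq> SubS" using GC DS by auto
              show "\<forall>A B. Imp A B \<in> G \<longrightarrow> A \<in> D \<or> B \<in> G" using iG noimpG by blast
              show "\<forall>A B. Imp A B \<in> D \<longrightarrow> A \<in> G \<and> B \<in> D" using iD noimpD by blast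
              show "\<forall>B. Box B \<in> G \<longrightarrow> B \<in> G" using nG nobox by (auto simp: isimp_def)
              have "set_mset \<Gamma> = {X\<in>G. \<not>isimp X}" using sG nG noimpG by (auto simp: isimp_def)
              moreover have "set_mset \<Delta> = {X\<in>D. \<not>isimp X}" using sD nD noimpD by (auto simp: isimp_def)
              ultimately show "\<exists>\<Gamma> \<Delta>. \<not> Grz_Seq \<Gamma> \<Delta> \<and> set_mset \<Gamma> = {X\<in>G. \<not>isimp X} \<and> set_mset \<Delta> = {X\<in>D. \<not>isimp X}"
                using nd by blast
            qed
            then show ?thesis by blast
          qed
        qed
      qed
    qed
  qed
qed

lemma saturate:
  "sinv \<Gamma> \<Delta> G D \<Longrightarrow> \<not> Grz_Seq \<Gamma> \<Delta> \<Longrightarrow> \<exists>G' D'. (G',D') \<in> W \<and> G \<subseteq> G' \<and> D \<subseteq> D'"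
  using saturate_aux by blast


definition boxset :: "'a fm set \<Rightarrow> 'a fm set" where "boxset X = {Y\<in>X. isbox Y}"
definition R :: "('a fm set \<times> 'a fm set) \<Rightarrow> ('a fm set \<times> 'a fm set) \<Rightarrow> bool" where
  "R w v = (v \<in> W \<and> (w = v \<or> boxset (fst w) \<subset> boxset (fst v)))"
definition V :: "('a fm set \<times> 'a fm set) \<Rightarrow> 'a \<Rightarrow> bool" where
  "V w p = (Atom p \<in> fst w)"

lemma W_fst: "w \<in> W \<Longrightarrow> fst w \<subseteq> CC" by (cases w) (auto simp: W_def)

lemma W_sat3: "(G,D) \<in> W \<Longrightarrow> Box B \<in> G \<Longrightarrow> B \<in> G" by (auto simp: W_def)

lemma W_und: assumes "(G,D) \<in> W"
  obtains \<Gamma> \<Delta> where "\<not> Grz_Seq \<Gamma> \<Delta>" "set_mset \<Gamma> = {X\<in>G. \<not>isimp X}" "set_mset \<Delta> = {X\<in>D. \<not>isimp X}"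
  using assms unfolding W_def by blast

lemma W_noax: "(G,D) \<in> W \<Longrightarrow> X \<in> G \<Longrightarrow> X \<in> D \<Longrightarrow> \<not> isimp X \<Longrightarrow> False"
proof -
  assume a: "(G,D) \<in> W" "X \<in> G" "X \<in> D" "\<not> isimp X"
  obtain \<Gamma> \<Delta> where u: "\<not> Grz_Seq \<Gamma> \<Delta>" "set_mset \<Gamma> = {X\<in>G. \<not>isimp X}" "set_mset \<Delta> = {X\<in>D. \<not>isimp X}"
    using W_und[OF a(1)] by blast
  have "X \<in># \<Gamma>" "X \<in># \<Delta>" using a u by auto
  then show False using u(1) grz_ax_in by blast
qed

lemma unbox_box: "(\<forall>x\<in>#M. isbox x) \<Longrightarrow> image_mset Box (image_mset unbox M) = M"
  by (induction M) (auto simp: isbox_def)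

lemma truth: "w \<in> W \<Longrightarrow> (A \<in> fst w \<longrightarrow> sat R V w A) \<and> (A \<in> snd w \<longrightarrow> \<not> sat R V w A)"
proof (induction A arbitrary: w)
  case Bot
  obtain G D where w: "w = (G,D)" by (cases w)
  obtain \<Gamma> \<Delta> where u: "\<not> Grz_Seq \<Gamma> \<Delta>" "set_mset \<Gamma> = {X\<in>G. \<not>isimp X}"
    using W_und Bot w by metis
  have "Bot \<notin> G"
  proof
    assume "Bot \<in> G" then have "Bot \<in># \<Gamma>" using u by (auto simp: isimp_def)
    then show False using u(1) grz_bot_in by blast
  qed
  then show ?case using w by simp
next
  case (Atom p)
  obtain G D where w: "w = (G,D)" by (cases w)
  show ?case using W_noax[of G D "Atom p"] Atom w by (auto simp: V_def isimp_def)
next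
  case (Imp A B)
  obtain G D where w: "w = (G,D)" by (cases w)
  have "Imp A B \<in> G \<Longrightarrow> A \<in> D \<or> B \<in> G" "Imp A B \<in> D \<Longrightarrow> A \<in> G \<and> B \<in> D"
    using Imp.prems w by (auto simp: W_def)
  then show ?case using Imp.IH[of w] Imp.prems w by auto
next
  case (Box A)
  obtain G D where w: "w = (G,D)" by (cases w)
  have wW: "(G,D) \<in> W" using Box.prems w by simp
  have part1: "sat R V w (Box A)" if "Box A \<in> G"
  proof (simp, intro allI impI)
    fix v assume "R w v"
    then have vW: "v \<in> W" and c: "w = v \<or> boxset G \<subset> boxset (fst v)" by (auto simp: R_def w)
    show "sat R V v A"
    proof (cases "w = v")
      case True
      then show ?thesis using W_sat3[OF wW that] Box.IH[of w] Box.prems w by auto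
    next
      case False
      then have "Box A \<in> fst v" using c that by (auto simp: boxset_def isbox_def)
      then have "A \<in> fst v" using W_sat3[of "fst v" "snd v"] vW by simp
      then show ?thesis using Box.IH[OF vW] by blast
    qed
  qed
  have part2: "\<not> sat R V w (Box A)" if bA: "Box A \<in> D"
  proof (cases "Box (Imp A (Box A)) \<in> G")
    case True
    then have "Imp A (Box A) \<in> G" using W_sat3[OF wW] by blast
    then have "A \<in> D \<or> Box A \<in> G" using wW by (auto simp: W_def)
    moreover have "Box A \<notin> G" using W_noax[OF wW _ bA] by (auto simp: isimp_def)
    ultimately have "A \<in> D" by blast
    then have "\<not> sat R V w A" using Box.IH[of w] Box.prems w by auto
    moreover have "R w w" using Box.prems by (simp add: R_def)
    ultimately show ?thesis by (metis sat.simps(4))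
  next
    case False
    obtain \<Gamma> \<Delta> where u: "\<not> Grz_Seq \<Gamma> \<Delta>" "set_mset \<Gamma> = {X\<in>G. \<not>isimp X}" "set_mset \<Delta> = {X\<in>D. \<not>isimp X}"
      using W_und[OF wW] by blast
    have GC: "G \<subseteq> CC" and DS: "D \<subseteq> SubS" using wW by (auto simp: W_def)
    have bAS: "Box A \<in> SubS" using DS bA by blast
    have "Box A \<in># \<Delta>" using u bA by (auto simp: isimp_def)
    define \<Delta>0 where "\<Delta>0 = \<Delta> - {#Box A#}"
    have \<Delta>eq: "\<Delta> = {#Box A#} + \<Delta>0" using \<open>Box A \<in># \<Delta>\<close> by (simp add: \<Delta>0_def)
    define \<Pi> where "\<Pi> = image_mset unbox (filter_mset isbox \<Gamma>)"
    have \<Pi>eq: "image_mset Box \<Pi> = filter_mset isbox \<Gamma>" unfolding \<Pi>_def by (rule unbox_box) simp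
    have \<Gamma>eq: "\<Gamma> = filter_mset (\<lambda>x. \<not> isbox x) \<Gamma> + image_mset Box \<Pi>"
      using \<Pi>eq multiset_partition[of \<Gamma> isbox] by (simp add: ac_simps)
    define \<Gamma>0 where "\<Gamma>0 = image_mset Box \<Pi> + {#Box (Imp A (Box A))#}"
    have nd0: "\<not> Grz_Seq \<Gamma>0 {#A#}"
    proof
      assume "Grz_Seq \<Gamma>0 {#A#}"
      then have "Grz_Seq (filter_mset (\<lambda>x. \<not> isbox x) \<Gamma> + image_mset Box \<Pi>) ({#Box A#} + \<Delta>0)"
        unfolding \<Gamma>0_def by (rule grz.boxGrz)
      then show False using u(1) \<Gamma>eq \<Delta>eq by simp
    qed
    have s\<Gamma>0: "set_mset \<Gamma>0 = insert (Box (Imp A (Box A))) (set_mset (filter_mset isbox \<Gamma>))"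
      unfolding \<Gamma>0_def \<Pi>eq by simp
    have "sinv \<Gamma>0 {#A#} (set_mset \<Gamma>0) {A}"
      unfolding sinv_def
    proof (intro conjI)
      show "set_mset \<Gamma>0 \<subseteq> CC" using s\<Gamma>0 u(2) GC c4[OF bAS] by auto
      show "{A} \<subseteq> SubS" using c_box_sub[OF bAS] by simp
    qed auto
    then obtain G' D' where v: "(G',D') \<in> W" "set_mset \<Gamma>0 \<subseteq> G'" "{A} \<subseteq> D'"
      using saturate nd0 by blast
    have "boxset G \<subseteq> boxset G'"
    proof
      fix X assume "X \<in> boxset G"
      then have "X \<in> G" "isbox X" by (auto simp: boxset_def)
      then have "X \<in> set_mset \<Gamma>0" using s\<Gamma>0 u(2) by (auto simp: isbox_def isimp_def)
      then show "X \<in> boxset G'" using v(2) \<open>isbox X\<close> by (auto simp: boxset_def)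
    qed
    moreover have "Box (Imp A (Box A)) \<in> boxset G' - boxset G"
      using v(2) s\<Gamma>0 False by (auto simp: boxset_def isbox_def)
    ultimately have "R w (G',D')" using v(1) w by (auto simp: R_def)
    moreover have "\<not> sat R V (G',D') A" using Box.IH[OF v(1)] v(3) by simp
    ultimately show ?thesis by auto
  qed
  show ?case using part1 part2 w by auto
qed

lemma main:
  assumes "set_mset \<Gamma> \<subseteq> S" "set_mset \<Delta> \<subseteq> S" "Grz_Seq_cut \<Gamma> \<Delta>"
  shows "Grz_Seq \<Gamma> \<Delta>"
proof (rule ccontr)
  assume nd: "\<not> Grz_Seq \<Gamma> \<Delta>"
  have SS: "S \<subseteq> SubS" unfolding SubS_def using sub_refl by blast
  have "sinv \<Gamma> \<Delta> (set_mset \<Gamma>) (set_mset \<Delta>)"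
    unfolding sinv_def using assms(1,2) SS SubS_CC by auto
  then obtain G D where w: "(G,D) \<in> W" "set_mset \<Gamma> \<subseteq> G" "set_mset \<Delta> \<subseteq> D"
    using saturate nd by blast
  have tG: "\<forall>X\<in>#\<Gamma>. sat R V (G,D) X" using truth[OF w(1)] w(2) by auto
  have tD: "\<not> (\<exists>X\<in>#\<Delta>. sat R V (G,D) X)" using truth[OF w(1)] w(3) by auto
  have RW: "\<And>w v. R w v \<Longrightarrow> v \<in> W" by (simp add: R_def)
  have Rrefl: "\<And>w. w \<in> W \<Longrightarrow> R w w" by (simp add: R_def)
  have Rtrans: "\<And>w v u. R w v \<Longrightarrow> R v u \<Longrightarrow> R w u" unfolding R_def by auto
  have Rf: "\<And>w v. R w v \<Longrightarrow> w \<noteq> v \<Longrightarrow> card (boxset (fst w)) < card (boxset (fst v))"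
  proof -
    fix w v assume "R w v" "w \<noteq> v"
    then have "v \<in> W" "boxset (fst w) \<subset> boxset (fst v)" by (auto simp: R_def)
    moreover have "finite (boxset (fst v))"
      using W_fst[OF \<open>v \<in> W\<close>] fin_CC by (auto simp: boxset_def intro: finite_subset)
    ultimately show "card (boxset (fst w)) < card (boxset (fst v))" by (simp add: psubset_card_mono)
  qed
  have fb: "\<And>w. w \<in> W \<Longrightarrow> card (boxset (fst w)) \<le> card CC"
  proof -
    fix w assume "w \<in> W"
    then have "boxset (fst w) \<subseteq> CC" using W_fst[of w] by (auto simp: boxset_def)
    then show "card (boxset (fst w)) \<le> card CC" using fin_CC by (rule card_mono[rotated])
  qed
  have "\<exists>X\<in>#\<Delta>. sat R V (G,D) X"
    using soundness[where R=R and W=W and f="\<lambda>w. card (boxset (fst w))" and b="card CC",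
        OF assms(3) RW Rrefl Rtrans Rf fb w(1) tG] .
  then show False using tD by blast
qed

end

theorem theorem2p2:
  fixes \<Gamma> \<Delta> :: "'a fm multiset"
  assumes "Grz_Seq_cut \<Gamma> \<Delta>"
  shows "Grz_Seq \<Gamma> \<Delta>"
proof -
  interpret cm "set_mset \<Gamma> \<union> set_mset \<Delta>" by unfold_locales simp
  show ?thesis using main assms by blast
qed

end
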